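(* Let $M=(E,\mathcal{I})$ be a matroid, $\Delta$ a positive integer, $w:E\to\{-\Delta,\dots,\Delta\}$ integer weights and $\mu\ge 0$. Let $A,B\in\mathcal{I}$ be disjoint with $|A|=|B|$ and $|w(A)-w(B)|\le\mu$. If $|A|=|B|\ge(2\Delta+1)^5+\mu$, then there exists $A'\in\mathcal{I}$ with $A'\neq A$, \[ w(A')=w(A)\quad\text{and}\quad |A'|=|A|. \]
   Context: $w(S)=\sum_{e\in S}w(e)$ for $S\subseteq E$. *)

theory Defs
  imports Complex_Main
begin

definition matroid :: "'a set \<Rightarrow> 'a set set \<Rightarrow> bool" where
  "matroid E I \<longleftrightarrow> finite E \<and> (\<forall>X\<in>I. X \<subseteq> E) \<and> {} \<in> I \<and>
     (\<forall>X Y. Y \<in> I \<longrightarrow> X \<subseteq> Y \<longrightarrow> X \<in> I) \<and>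
     (\<forall>X Y. X \<in> I \<longrightarrow> Y \<in> I \<longrightarrow> card X < card Y \<longrightarrow>
        (\<exists>e \<in> Y - X. insert e X \<in> I))"

definition wsum :: "('a \<Rightarrow> int) \<Rightarrow> 'a set \<Rightarrow> int" where
  "wsum w S = (\<Sum>e\<in>S. w e)"

end

theory Submission
  imports Defs
begin

locale tm =
  fixes E :: "'a set" and J :: "'a set set" and k :: nat
  assumes fin: "finite E"
  and sub: "X \<in> J \<Longrightarrow> X \<subseteq> E"
  and emp: "{} \<in> J"
  and down: "Y \<in> J \<Longrightarrow> X \<subseteq> Y \<Longrightarrow> X \<in> J"
  and aug: "X \<in> J \<Longrightarrow> Y \<in> J \<Longrightarrow> card X < card Y \<Longrightarrow> \<exists>e\<in>Y-X. insert e X \<in> J"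
  and bnd: "X \<in> J \<Longrightarrow> card X \<le> k"
begin

lemma finJ: "X \<in> J \<Longrightarrow> finite X"
  using sub fin finite_subset by blast

lemma aug_full_aux:
  "\<forall>X. X \<in> J \<longrightarrow> card X \<le> n \<longrightarrow> n \<le> card Z \<longrightarrow> n - card X = d \<longrightarrow>
     (\<exists>W. W \<subseteq> Z - X \<and> X \<union> W \<in> J \<and> card (X \<union> W) = n)" if Z: "Z \<in> J" for d
proof (induction d)
  case 0
  then show ?case by (metis Diff_empty Un_empty_right diff_is_0_eq empty_subsetI le_antisym)
next
  case (Suc d)
  show ?case
  proof (intro allI impI)
    fix X assume X: "X \<in> J" "card X \<le> n" "n \<le> card Z" "n - card X = Suc d"
    then have "card X < card Z" by linarith
    then obtain e where e: "e \<in> Z - X" "insert e X \<in> J" using aug[OF X(1) Z] by blast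
    have fX: "finite X" using finJ X(1) .
    have ce: "card (insert e X) = card X + 1" using e fX by simp
    then obtain W where W: "W \<subseteq> Z - insert e X" "insert e X \<union> W \<in> J" "card (insert e X \<union> W) = n"
      using Suc.IH e(2) X by (metis Suc_eq_plus1 Suc_leI diff_Suc_1 diff_diff_left zero_less_Suc zero_less_diff)
    show "\<exists>W. W \<subseteq> Z - X \<and> X \<union> W \<in> J \<and> card (X \<union> W) = n"
      by (rule exI[of _ "insert e W"]) (use W e in auto)
  qed
qed

lemma aug_full:
  assumes "X \<in> J" "Z \<in> J" "card X \<le> n" "n \<le> card Z"
  shows "\<exists>W. W \<subseteq> Z - X \<and> X \<union> W \<in> J \<and> card (X \<union> W) = n"
  using aug_full_aux[OF assms(2)] assms by blast

definition rk :: "'a set \<Rightarrow> nat" where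
  "rk S = Max (card ` {Y. Y \<subseteq> S \<and> Y \<in> J})"

lemma finite_fam: "finite {Y. Y \<subseteq> S \<and> Y \<in> J}"
proof -
  have "{Y. Y \<subseteq> S \<and> Y \<in> J} \<subseteq> Pow E" using sub by auto
  then show ?thesis using fin finite_subset by blast
qed

lemma rk_ge: "Y \<subseteq> S \<Longrightarrow> Y \<in> J \<Longrightarrow> card Y \<le> rk S"
  unfolding rk_def using finite_fam by (intro Max_ge) auto

lemma rk_ex: "\<exists>Y. Y \<subseteq> S \<and> Y \<in> J \<and> card Y = rk S"
proof -
  have "{Y. Y \<subseteq> S \<and> Y \<in> J} \<noteq> {}" using emp by auto
  then have "rk S \<in> card ` {Y. Y \<subseteq> S \<and> Y \<in> J}"
    unfolding rk_def using finite_fam by (intro Max_in) auto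
  then show ?thesis by auto
qed

lemma rk_le_k: "rk S \<le> k"
  using rk_ex[of S] bnd by force

lemma rk_mono: "S \<subseteq> T \<Longrightarrow> rk S \<le> rk T"
proof -
  assume "S \<subseteq> T"
  obtain Y where "Y \<subseteq> S" "Y \<in> J" "card Y = rk S" using rk_ex by blast
  then show ?thesis using rk_ge[of Y T] \<open>S \<subseteq> T\<close> by auto
qed

lemma rk_indep: "Y \<in> J \<Longrightarrow> rk Y = card Y"
proof -
  assume Y: "Y \<in> J"
  obtain Z where "Z \<subseteq> Y" "Z \<in> J" "card Z = rk Y" using rk_ex by blast
  then have "rk Y \<le> card Y" using finJ[OF Y] card_mono by metis
  moreover have "card Y \<le> rk Y" using rk_ge[OF _ Y] by simp
  ultimately show ?thesis by simp
qed

lemma rk_extend: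
  assumes "Y \<subseteq> S" "Y \<in> J"
  shows "\<exists>Y'. Y \<subseteq> Y' \<and> Y' \<subseteq> S \<and> Y' \<in> J \<and> card Y' = rk S"
proof -
  obtain Z where Z: "Z \<subseteq> S" "Z \<in> J" "card Z = rk S" using rk_ex by blast
  have "card Y \<le> rk S" using rk_ge assms by blast
  then obtain W where W: "W \<subseteq> Z - Y" "Y \<union> W \<in> J" "card (Y \<union> W) = rk S"
    using aug_full[OF assms(2) Z(2), of "rk S"] Z(3) by auto
  show ?thesis by (rule exI[of _ "Y \<union> W"]) (use W Z assms in auto)
qed

lemma rk_submod: "rk (S \<union> T) + rk (S \<inter> T) \<le> rk S + rk T"
proof -
  obtain I0 where I0: "I0 \<subseteq> S \<inter> T" "I0 \<in> J" "card I0 = rk (S \<inter> T)" using rk_ex by blast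
  obtain I1 where I1: "I0 \<subseteq> I1" "I1 \<subseteq> S \<union> T" "I1 \<in> J" "card I1 = rk (S \<union> T)"
    using rk_extend[of I0 "S \<union> T"] I0 by auto
  have f1: "finite I1" using finJ I1(3) .
  have a: "card (I1 \<inter> S) \<le> rk S" using rk_ge[of "I1 \<inter> S" S] down[OF I1(3)] by auto
  have b: "card (I1 \<inter> T) \<le> rk T" using rk_ge[of "I1 \<inter> T" T] down[OF I1(3)] by auto
  have c: "card (I1 \<inter> S \<inter> T) \<le> card I0"
    using rk_ge[of "I1 \<inter> S \<inter> T" "S \<inter> T"] down[OF I1(3), of "I1 \<inter> S \<inter> T"] I0(3) by auto
  have d: "card I0 \<le> card (I1 \<inter> S \<inter> T)"
    using I0 I1 f1 by (intro card_mono) auto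
  have e: "card (I1 \<inter> S) + card (I1 \<inter> T) = card ((I1 \<inter> S) \<union> (I1 \<inter> T)) + card ((I1 \<inter> S) \<inter> (I1 \<inter> T))"
    using f1 by (intro card_Un_Int) auto
  have "(I1 \<inter> S) \<union> (I1 \<inter> T) = I1" using I1(2) by auto
  moreover have "(I1 \<inter> S) \<inter> (I1 \<inter> T) = I1 \<inter> S \<inter> T" by auto
  ultimately have "card (I1 \<inter> S) + card (I1 \<inter> T) = card I1 + card (I1 \<inter> S \<inter> T)" using e by simp
  then show ?thesis using a b c d I0(3) I1(4) by linarith
qed

end

lemma ivt_aux:
  fixes F :: "'a set set" and P :: "'a set"
  assumes exch: "\<And>K K' x. K \<in> F \<Longrightarrow> K' \<in> F \<Longrightarrow> x \<in> K - K' \<Longrightarrow> \<exists>y\<in>K'-K. insert y (K - {x}) \<in> F"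
  and finF: "\<And>K. K \<in> F \<Longrightarrow> finite K"
  and cardF: "\<And>K. K \<in> F \<Longrightarrow> card K = r"
  and K2: "K2 \<in> F" and t2: "t \<le> card (K2 \<inter> P)"
  shows "\<forall>K1. K1 \<in> F \<longrightarrow> card (K1 \<inter> P) \<le> t \<longrightarrow> card (K2 - K1) = n \<longrightarrow> (\<exists>K\<in>F. card (K \<inter> P) = t)"
proof (induction n)
  case 0
  show ?case
  proof (intro allI impI)
    fix K1 assume a: "K1 \<in> F" "card (K1 \<inter> P) \<le> t" "card (K2 - K1) = 0"
    have "K2 - K1 = {}" using a(3) finF[OF K2] by simp
    then have "K2 \<subseteq> K1" by blast
    then have "K2 = K1" using card_subset_eq[OF finF[OF a(1)]] cardF[OF a(1)] cardF[OF K2] by metis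
    then show "\<exists>K\<in>F. card (K \<inter> P) = t" using a t2 by (metis le_antisym)
  qed
next
  case (Suc n)
  show ?case
  proof (intro allI impI)
    fix K1 assume a: "K1 \<in> F" "card (K1 \<inter> P) \<le> t" "card (K2 - K1) = Suc n"
    show "\<exists>K\<in>F. card (K \<inter> P) = t"
    proof (cases "card (K1 \<inter> P) = t")
      case True then show ?thesis using a by blast
    next
      case False
      have "K1 \<noteq> K2" using a(3) by auto
      have "\<not> K1 \<subseteq> K2"
      proof
        assume "K1 \<subseteq> K2"
        then have "K1 = K2" using card_subset_eq[OF finF[OF K2]] cardF[OF a(1)] cardF[OF K2] by metis
        then show False using \<open>K1 \<noteq> K2\<close> by simp
      qed
      then obtain x where x: "x \<in> K1 - K2" by blast
      obtain y where y: "y \<in> K2 - K1" "insert y (K1 - {x}) \<in> F" using exch[OF a(1) K2 x] by blast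
      have f1: "finite K1" using finF a(1) by blast
      have "insert y (K1 - {x}) \<inter> P \<subseteq> insert y (K1 \<inter> P)" by blast
      then have "card (insert y (K1 - {x}) \<inter> P) \<le> card (insert y (K1 \<inter> P))"
        using f1 by (intro card_mono) auto
      also have "\<dots> \<le> card (K1 \<inter> P) + 1" using f1 by (simp add: card_insert_if)
      finally have c1: "card (insert y (K1 - {x}) \<inter> P) \<le> t" using a(2) False by linarith
      have "K2 - insert y (K1 - {x}) = (K2 - K1) - {y}" using x by blast
      then have "card (K2 - insert y (K1 - {x})) = n" using a(3) y(1) finF[OF K2] by simp
      then show ?thesis using Suc.IH y(2) c1 by blast
    qed
  qed
qed

lemma ivt:
  fixes F :: "'a set set" and P :: "'a set"
  assumes exch: "\<And>K K' x. K \<in> F \<Longrightarrow> K' \<in> F \<Longrightarrow> x \<in> K - K' \<Longrightarrow> \<exists>y\<in>K'-K. insert y (K - {x}) \<in> F"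
  and finF: "\<And>K. K \<in> F \<Longrightarrow> finite K"
  and cardF: "\<And>K. K \<in> F \<Longrightarrow> card K = r"
  and K1: "K1 \<in> F" and K2: "K2 \<in> F" and t1: "card (K1 \<inter> P) \<le> t" and t2: "t \<le> card (K2 \<inter> P)"
  shows "\<exists>K\<in>F. card (K \<inter> P) = t"
  using ivt_aux[OF exch finF cardF K2 t2] K1 t1 by blast

context tm begin

lemma exch_half:
  assumes A: "A \<in> J" "card A = k" and P: "P \<subseteq> A" and Q: "Q \<subseteq> A" and PQ: "P \<inter> Q = {}"
  and Y: "Y1 \<inter> A = {}" "Y2 \<inter> A = {}" "Y1 \<inter> Y2 = {}"
  and i1: "(A - P) \<union> Y1 \<in> J" and i2: "(A - Q) \<union> Y2 \<in> J" and i3: "(A - P - Q) \<union> Y1 \<union> Y2 \<in> J"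
  shows "\<exists>K. K \<subseteq> P \<union> Q \<and> (A - P - Q) \<union> Y1 \<union> Y2 \<union> K \<in> J \<and> card ((A - P - Q) \<union> Y1 \<union> Y2 \<union> K) = k
           \<and> card P - card Y1 \<le> card (K \<inter> P)"
proof -
  define D where "D = A - P - Q"
  define J0 where "J0 = D \<union> Y1 \<union> Y2"
  have fA: "finite A" using finJ A(1) .
  have fY1: "finite Y1" using finJ[OF i1] by auto
  have fY2: "finite Y2" using finJ[OF i2] by auto
  have fD: "finite D" using fA D_def by auto
  have cA: "card A = card D + card P + card Q"
  proof -
    have "A = D \<union> P \<union> Q" using P Q D_def by auto
    moreover have "card (D \<union> P \<union> Q) = card D + card P + card Q"
    proof -
      have f: "finite P" "finite Q" using fA P Q finite_subset by auto
      have "card (D \<union> P) = card D + card P" using fD f D_def by (intro card_Un_disjoint) auto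
      moreover have "card ((D \<union> P) \<union> Q) = card (D \<union> P) + card Q" using fD f D_def PQ by (intro card_Un_disjoint) auto
      ultimately show ?thesis by simp
    qed
    ultimately show ?thesis by simp
  qed
  have cAP: "card (A - P) = card D + card Q"
  proof -
    have e: "A - P = D \<union> Q" using P Q PQ D_def by auto
    have "D \<inter> Q = {}" using D_def by auto
    then have "card (D \<union> Q) = card D + card Q" using fD fA Q finite_subset by (intro card_Un_disjoint) auto
    then show ?thesis using e by simp
  qed
  have cAQ: "card (A - Q) = card D + card P"
  proof -
    have e: "A - Q = D \<union> P" using P Q PQ D_def by auto
    have "D \<inter> P = {}" using D_def by auto
    then have "card (D \<union> P) = card D + card P" using fD fA P finite_subset by (intro card_Un_disjoint) auto
    then show ?thesis using e by simp
  qed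
  have c1: "card ((A - P) \<union> Y1) = card D + card Q + card Y1"
    using cAP Y fY1 fA by (subst card_Un_disjoint) auto
  have c2: "card ((A - Q) \<union> Y2) = card D + card P + card Y2"
    using cAQ Y fY2 fA by (subst card_Un_disjoint) auto
  have cJ0: "card J0 = card D + card Y1 + card Y2"
  proof -
    have "card (D \<union> Y1) = card D + card Y1" using fD fY1 Y D_def by (intro card_Un_disjoint) auto
    moreover have "card ((D \<union> Y1) \<union> Y2) = card (D \<union> Y1) + card Y2" using fD fY1 fY2 Y D_def by (intro card_Un_disjoint) auto
    ultimately show ?thesis unfolding J0_def by simp
  qed
  have y1P: "card Y1 \<le> card P" using bnd[OF i1] c1 cA A(2) by linarith
  have J0J: "J0 \<in> J" using i3 D_def J0_def by simp
  obtain W1 where W1: "W1 \<subseteq> ((A - Q) \<union> Y2) - J0" "J0 \<union> W1 \<in> J" "card (J0 \<union> W1) = card ((A - Q) \<union> Y2)"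
    using aug_full[OF J0J i2, of "card ((A - Q) \<union> Y2)"] cJ0 c2 y1P by auto
  have W1P: "W1 \<subseteq> P" using W1(1) D_def J0_def by auto
  have W1J0: "W1 \<inter> J0 = {}" using W1(1) by auto
  have fW1: "finite W1" using W1P P fA by (meson finite_subset)
  have fJ0: "finite J0" using finJ J0J .
  have cW1: "card W1 = card P - card Y1"
  proof -
    have "card (J0 \<union> W1) = card J0 + card W1" using W1J0 fW1 fJ0 by (intro card_Un_disjoint) auto
    then show ?thesis using W1(3) c2 cJ0 by linarith
  qed
  have "card (J0 \<union> W1) \<le> k" using bnd W1(2) by blast
  then obtain W2 where W2: "W2 \<subseteq> A - (J0 \<union> W1)" "(J0 \<union> W1) \<union> W2 \<in> J" "card ((J0 \<union> W1) \<union> W2) = k"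
    using aug_full[OF W1(2) A(1), of k] A(2) by auto
  define K where "K = W1 \<union> W2"
  have KPQ: "K \<subseteq> P \<union> Q" using W2(1) W1P K_def D_def J0_def by auto
  have "card P - card Y1 \<le> card (K \<inter> P)"
  proof -
    have "W1 \<subseteq> K \<inter> P" using W1P K_def by auto
    moreover have "finite (K \<inter> P)" using P fA by (meson finite_subset inf_le2)
    ultimately show ?thesis using cW1 card_mono by metis
  qed
  moreover have "J0 \<union> K = (J0 \<union> W1) \<union> W2" using K_def by auto
  ultimately show ?thesis using KPQ W2 J0_def D_def by (intro exI[of _ K]) auto
qed

end

context tm begin

lemma card_un3:
  assumes "finite D" "finite Y1" "finite Y2" "D \<inter> Y1 = {}" "D \<inter> Y2 = {}" "Y1 \<inter> Y2 = {}"
  shows "card (D \<union> Y1 \<union> Y2) = card D + card Y1 + card Y2"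
proof -
  have "card (D \<union> Y1) = card D + card Y1" using assms by (intro card_Un_disjoint) auto
  moreover have "card ((D \<union> Y1) \<union> Y2) = card (D \<union> Y1) + card Y2" using assms by (intro card_Un_disjoint) auto
  ultimately show ?thesis by simp
qed

lemma exch2:
  assumes A: "A \<in> J" "card A = k" and P: "P \<subseteq> A" and Q: "Q \<subseteq> A" and PQ: "P = Q \<or> P \<inter> Q = {}"
  and Y: "Y1 \<inter> A = {}" "Y2 \<inter> A = {}" "Y1 \<inter> Y2 = {}"
  and i1: "(A - P) \<union> Y1 \<in> J" and i2: "(A - Q) \<union> Y2 \<in> J" and i3: "(A - P - Q) \<union> Y1 \<union> Y2 \<in> J"
  shows "\<exists>X1 X2. X1 \<subseteq> P \<and> X2 \<subseteq> Q \<and> X1 \<inter> X2 = {} \<and> card X1 = card Y1 \<and> card X2 = card Y2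
            \<and> (A - X1 - X2) \<union> Y1 \<union> Y2 \<in> J"
proof -
  have fA: "finite A" using finJ A(1) .
  have fY1: "finite Y1" using finJ[OF i1] by auto
  have fY2: "finite Y2" using finJ[OF i2] by auto
  have fP: "finite P" using fA P by (meson finite_subset)
  have fQ: "finite Q" using fA Q by (meson finite_subset)
  have cAP: "card (A - P) = k - card P" using A(2) P fP by (simp add: card_Diff_subset)
  have cAQ: "card (A - Q) = k - card Q" using A(2) Q fQ by (simp add: card_Diff_subset)
  have cPk: "card P \<le> k" using A(2) P fA card_mono by metis
  have cQk: "card Q \<le> k" using A(2) Q fA card_mono by metis
  have "card ((A - P) \<union> Y1) = card (A - P) + card Y1" using fA fY1 Y by (intro card_Un_disjoint) auto
  then have y1P: "card Y1 \<le> card P" using bnd[OF i1] cAP cPk by linarith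
  have "card ((A - Q) \<union> Y2) = card (A - Q) + card Y2" using fA fY2 Y by (intro card_Un_disjoint) auto
  then have y2Q: "card Y2 \<le> card Q" using bnd[OF i2] cAQ cQk by linarith
  show ?thesis
  proof (cases "P = Q")
    case True
    define J0 where "J0 = (A - P) \<union> Y1 \<union> Y2"
    have J0J: "J0 \<in> J" using i3 True J0_def by simp
    have cJ0: "card J0 = card (A - P) + card Y1 + card Y2"
      unfolding J0_def using fA fY1 fY2 Y by (intro card_un3) auto
    have "card J0 \<le> k" using bnd J0J by blast
    then obtain W where W: "W \<subseteq> A - J0" "J0 \<union> W \<in> J" "card (J0 \<union> W) = k"
      using aug_full[OF J0J A(1), of k] A(2) by auto
    have WP: "W \<subseteq> P" using W(1) J0_def by auto
    have fW: "finite W" using WP fP by (meson finite_subset)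
    have fJ0: "finite J0" using finJ J0J .
    have "card (J0 \<union> W) = card J0 + card W" using W(1) fW fJ0 by (intro card_Un_disjoint) auto
    then have cW: "card W + card Y1 + card Y2 = card P" using W(3) cJ0 cAP cPk by linarith
    define X where "X = P - W"
    have cX: "card X = card Y1 + card Y2" using cW WP fW X_def by (simp add: card_Diff_subset)
    obtain X1 where X1: "X1 \<subseteq> X" "card X1 = card Y1" using obtain_subset_with_card_n[of "card Y1" X] cX by auto
    define X2 where "X2 = X - X1"
    have fX: "finite X" using X_def fP by simp
    have cX2: "card X2 = card Y2" using X1 cX fX X2_def by (simp add: card_Diff_subset finite_subset)
    have "A - X1 - X2 = (A - P) \<union> W" using X1 X2_def X_def WP P by auto
    then have "(A - X1 - X2) \<union> Y1 \<union> Y2 = J0 \<union> W" using J0_def by auto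
    then show ?thesis using W(2) X1 cX2 X2_def X_def True by (intro exI[of _ X1] exI[of _ X2]) auto
  next
    case False
    then have PQd: "P \<inter> Q = {}" using PQ by simp
    define J0 where "J0 = (A - P - Q) \<union> Y1 \<union> Y2"
    have J0J: "J0 \<in> J" using i3 J0_def by simp
    have fJ0: "finite J0" using finJ J0J .
    have cAPQ: "card (A - P - Q) + card P + card Q = k"
    proof -
      have "card (A - P - Q) = card (A - P) - card Q" using Q PQd fQ by (intro card_Diff_subset) auto
      moreover have "card Q \<le> card (A - P)" using Q PQd fA by (intro card_mono) auto
      ultimately show ?thesis using cAP cPk by linarith
    qed
    have cJ0: "card J0 = card (A - P - Q) + card Y1 + card Y2"
      unfolding J0_def using fA fY1 fY2 Y by (intro card_un3) auto
    define F where "F = {K. K \<subseteq> P \<union> Q \<and> J0 \<union> K \<in> J \<and> card (J0 \<union> K) = k}"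
    have FJ0: "K \<inter> J0 = {}" if "K \<in> F" for K
    proof -
      have "K \<subseteq> P \<union> Q" using that F_def by blast
      then show ?thesis using J0_def Y P Q by blast
    qed
    have Ffin: "finite K" if "K \<in> F" for K proof -
      have "K \<subseteq> P \<union> Q" using that F_def by blast
      moreover have "finite (P \<union> Q)" using fP fQ by simp
      ultimately show ?thesis by (rule finite_subset)
    qed
    have Fmem: "K \<subseteq> P \<union> Q" "J0 \<union> K \<in> J" "card (J0 \<union> K) = k" if "K \<in> F" for K
      using that unfolding F_def by simp_all
    have Fcard: "card K = card P + card Q - card Y1 - card Y2" if "K \<in> F" for K
    proof -
      have "card (J0 \<union> K) = card J0 + card K" using FJ0[OF that] Ffin[OF that] fJ0 by (intro card_Un_disjoint) auto
      then show ?thesis using Fmem(3)[OF that] cJ0 cAPQ by linarith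
    qed
    have Fex: "\<exists>y\<in>K'-K. insert y (K - {x}) \<in> F" if K: "K \<in> F" "K' \<in> F" "x \<in> K - K'" for K K' x
    proof -
      note m1 = Fmem[OF K(1)] and m2 = Fmem[OF K(2)]
      have xJ0: "x \<notin> J0" using FJ0[OF K(1)] K(3) by blast
      have s1: "(J0 \<union> K) - {x} \<in> J" by (rule down[OF m1(2)]) blast
      have fin1: "finite (J0 \<union> K)" using fJ0 Ffin[OF K(1)] by simp
      have xin: "x \<in> J0 \<union> K" using K(3) by blast
      have c1: "card ((J0 \<union> K) - {x}) = k - 1" using m1(3) fin1 xin by simp
      have kpos: "k > 0" proof -
        have "J0 \<union> K \<noteq> {}" using xin by blast
        then show ?thesis using m1(3) fin1 card_gt_0_iff by metis
      qed
      have "card ((J0 \<union> K) - {x}) < card (J0 \<union> K')" using c1 kpos m2(3) by linarith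
      then obtain e where e: "e \<in> (J0 \<union> K') - ((J0 \<union> K) - {x})" "insert e ((J0 \<union> K) - {x}) \<in> J"
        using aug[OF s1 m2(2)] by blast
      have eK: "e \<in> K' - K"
      proof -
        have "e \<notin> J0" using e(1) xJ0 by blast
        then show ?thesis using e(1) K(3) by blast
      qed
      have eq: "J0 \<union> insert e (K - {x}) = insert e ((J0 \<union> K) - {x})" using xJ0 by blast
      have fin2: "finite ((J0 \<union> K) - {x})" using fin1 by simp
      have "e \<notin> (J0 \<union> K) - {x}" using e(1) by blast
      then have "card (insert e ((J0 \<union> K) - {x})) = k" using fin2 c1 kpos by simp
      moreover have "insert e (K - {x}) \<subseteq> P \<union> Q" using m1(1) m2(1) eK by blast
      ultimately have "insert e (K - {x}) \<in> F" using e(2) eq unfolding F_def by simp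
      then show ?thesis using eK by blast
    qed
    obtain K1 where K1: "K1 \<subseteq> P \<union> Q" "(A - P - Q) \<union> Y1 \<union> Y2 \<union> K1 \<in> J"
        "card ((A - P - Q) \<union> Y1 \<union> Y2 \<union> K1) = k" "card P - card Y1 \<le> card (K1 \<inter> P)"
      using exch_half[OF A P Q PQd Y i1 i2 i3] by blast
    have K1F: "K1 \<in> F" using K1 F_def J0_def by auto
    have i3': "(A - Q - P) \<union> Y2 \<union> Y1 \<in> J" proof -
      have "(A - Q - P) \<union> Y2 \<union> Y1 = (A - P - Q) \<union> Y1 \<union> Y2" by auto
      then show ?thesis using i3 by simp
    qed
    obtain K2 where K2: "K2 \<subseteq> Q \<union> P" "(A - Q - P) \<union> Y2 \<union> Y1 \<union> K2 \<in> J"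
        "card ((A - Q - P) \<union> Y2 \<union> Y1 \<union> K2) = k" "card Q - card Y2 \<le> card (K2 \<inter> Q)"
      proof -
      have "Q \<inter> P = {}" "Y2 \<inter> Y1 = {}" using PQd Y(3) by auto
      then show ?thesis using that exch_half[OF A Q P _ Y(2) Y(1) _ i2 i1 i3'] by blast
    qed
    have eqs: "(A - Q - P) \<union> Y2 \<union> Y1 \<union> K2 = J0 \<union> K2" using J0_def by auto
    have K2F: "K2 \<in> F" using K2 F_def eqs by auto
    have "card (K2 \<inter> P) + card (K2 \<inter> Q) = card K2"
    proof -
      have "card ((K2 \<inter> P) \<union> (K2 \<inter> Q)) = card (K2 \<inter> P) + card (K2 \<inter> Q)"
        using PQd Ffin[OF K2F] by (intro card_Un_disjoint) auto
      moreover have "(K2 \<inter> P) \<union> (K2 \<inter> Q) = K2" using K2(1) by auto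
      ultimately show ?thesis by simp
    qed
    then have t2: "card (K2 \<inter> P) \<le> card P - card Y1" using Fcard[OF K2F] K2(4) y1P y2Q by linarith
    obtain K where K: "K \<in> F" "card (K \<inter> P) = card P - card Y1"
      using ivt[OF Fex Ffin Fcard K2F K1F t2 K1(4)] by blast
    have "card (K \<inter> P) + card (K \<inter> Q) = card K"
    proof -
      have "card ((K \<inter> P) \<union> (K \<inter> Q)) = card (K \<inter> P) + card (K \<inter> Q)"
        using PQd Ffin[OF K(1)] by (intro card_Un_disjoint) auto
      moreover have "(K \<inter> P) \<union> (K \<inter> Q) = K" using K(1) F_def by auto
      ultimately show ?thesis by simp
    qed
    then have cKQ: "card (K \<inter> Q) = card Q - card Y2" using Fcard[OF K(1)] K(2) y1P y2Q by linarith
    define X1 where "X1 = P - K"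
    define X2 where "X2 = Q - K"
    have cX1: "card X1 = card Y1"
    proof -
      have "card X1 = card P - card (K \<inter> P)" unfolding X1_def using fP
        by (simp add: card_Diff_subset_Int Int_commute)
      then show ?thesis using K(2) y1P by simp
    qed
    have cX2: "card X2 = card Y2"
    proof -
      have "card X2 = card Q - card (K \<inter> Q)" unfolding X2_def using fQ
        by (simp add: card_Diff_subset_Int Int_commute)
      then show ?thesis using cKQ y2Q by simp
    qed
    have "(A - X1 - X2) \<union> Y1 \<union> Y2 = J0 \<union> K" using K(1) F_def X1_def X2_def J0_def P Q by auto
    then show ?thesis using K(1) F_def cX1 cX2 PQd X1_def X2_def by (intro exI[of _ X1] exI[of _ X2]) auto
  qed
qed

end

locale tmAB = tm +
  fixes A B :: "'a set"
  assumes AJ: "A \<in> J" and BJ: "B \<in> J" and cA: "card A = k" and cB: "card B = k" and AB: "A \<inter> B = {}"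
begin

definition Ac :: "('a \<Rightarrow> int) \<Rightarrow> int \<Rightarrow> 'a set" where "Ac u c = {a\<in>A. u a = c}"
definition Bc :: "('a \<Rightarrow> int) \<Rightarrow> int \<Rightarrow> 'a set" where "Bc u c = {b\<in>B. u b = c}"
definition rho :: "('a \<Rightarrow> int) \<Rightarrow> int \<Rightarrow> 'a set \<Rightarrow> int" where
  "rho u c U = int (rk ((A - Ac u c) \<union> U)) - int (card (A - Ac u c))"

lemma fA: "finite A" using finJ AJ .
lemma fB: "finite B" using finJ BJ .

lemma rk_AU: "rk (A \<union> U) = k"
  using rk_ge[of A "A \<union> U"] AJ cA rk_le_k[of "A \<union> U"] by auto

lemma rho_nonneg: "rho u c U \<ge> 0"
proof -
  have "A - Ac u c \<in> J" by (rule down[OF AJ]) blast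
  then have "card (A - Ac u c) \<le> rk ((A - Ac u c) \<union> U)" by (intro rk_ge) auto
  then show ?thesis unfolding rho_def by simp
qed

lemma rho_le: "rho u c U \<le> int (card (Ac u c))"
proof -
  have "card (A - Ac u c) = k - card (Ac u c)" using cA fA by (simp add: Ac_def card_Diff_subset)
  moreover have "card (Ac u c) \<le> k" using cA fA card_mono[of A "Ac u c"] by (auto simp: Ac_def)
  ultimately show ?thesis unfolding rho_def using rk_le_k[of "(A - Ac u c) \<union> U"] by linarith
qed

lemma rho_empty: "rho u c {} = 0"
proof -
  have "A - Ac u c \<in> J" by (rule down[OF AJ]) blast
  then show ?thesis unfolding rho_def by (simp add: rk_indep)
qed

lemma rho_un: "rho u c (U \<union> V) \<le> rho u c U + rho u c V"
proof -
  define D where "D = A - Ac u c"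
  have DJ: "D \<in> J" unfolding D_def by (rule down[OF AJ]) blast
  have e: "(D \<union> U) \<union> (D \<union> V) = D \<union> (U \<union> V)" by auto
  have "rk (D \<union> (U \<union> V)) + rk ((D \<union> U) \<inter> (D \<union> V)) \<le> rk (D \<union> U) + rk (D \<union> V)"
    using rk_submod[of "D \<union> U" "D \<union> V"] e by simp
  moreover have "card D \<le> rk ((D \<union> U) \<inter> (D \<union> V))" using DJ by (intro rk_ge) auto
  ultimately show ?thesis unfolding rho_def D_def[symmetric] by linarith
qed

lemma rho_UN: "finite S \<Longrightarrow> rho u c (\<Union>b\<in>S. G b) \<le> (\<Sum>b\<in>S. rho u c (G b))"
proof (induction S rule: finite_induct)
  case empty then show ?case by (simp add: rho_empty)
next
  case (insert x F)
  have "rho u c (\<Union>b\<in>insert x F. G b) = rho u c (G x \<union> (\<Union>b\<in>F. G b))" by simp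
  also have "\<dots> \<le> rho u c (G x) + rho u c (\<Union>b\<in>F. G b)" by (rule rho_un)
  also have "\<dots> \<le> rho u c (G x) + (\<Sum>b\<in>F. rho u c (G b))" using insert.IH by simp
  finally show ?case using insert.hyps by simp
qed

definition gT :: "('a \<Rightarrow> int) \<Rightarrow> int set \<Rightarrow> 'a set \<Rightarrow> int" where
  "gT u T U = int (rk ((A - {a\<in>A. u a \<in> T}) \<union> U)) - int (card (A - {a\<in>A. u a \<in> T}))"

lemma gT_single: "gT u {c} U = rho u c U"
  unfolding gT_def rho_def Ac_def by simp

lemma gT_sum: "finite T \<Longrightarrow> gT u T U \<le> (\<Sum>c\<in>T. rho u c U)"
proof (induction T rule: finite_induct)
  case empty
  have "gT u {} U = 0" unfolding gT_def using rk_AU cA by simp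
  then show ?case by simp
next
  case (insert c T)
  define P1 where "P1 = A - Ac u c"
  define P2 where "P2 = A - {a\<in>A. u a \<in> T}"
  have un: "P1 \<union> P2 = A" using insert.hyps P1_def P2_def Ac_def by auto
  have it: "P1 \<inter> P2 = A - {a\<in>A. u a \<in> insert c T}" using P1_def P2_def Ac_def by auto
  have "rk ((P1 \<union> U) \<union> (P2 \<union> U)) + rk ((P1 \<union> U) \<inter> (P2 \<union> U)) \<le> rk (P1 \<union> U) + rk (P2 \<union> U)"
    by (rule rk_submod)
  moreover have "(P1 \<union> U) \<union> (P2 \<union> U) = A \<union> U" using un by auto
  moreover have "(P1 \<union> U) \<inter> (P2 \<union> U) = (A - {a\<in>A. u a \<in> insert c T}) \<union> U" using it by auto
  moreover have "card P1 + card P2 = card A + card (P1 \<inter> P2)"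
  proof -
    have "card P1 + card P2 = card (P1 \<union> P2) + card (P1 \<inter> P2)"
      using fA P1_def P2_def by (intro card_Un_Int) auto
    then show ?thesis using un by simp
  qed
  ultimately have "gT u (insert c T) U \<le> rho u c U + gT u T U"
    unfolding gT_def rho_def P1_def[symmetric] P2_def[symmetric] using rk_AU cA it by simp
  then show ?case using insert by simp
qed

lemma card_le_sum_rho:
  assumes "U \<subseteq> B" and "\<forall>a\<in>A. u a \<in> C" and "finite C"
  shows "int (card U) \<le> (\<Sum>c\<in>C. rho u c U)"
proof -
  have "{a\<in>A. u a \<in> C} = A" using assms by auto
  then have "gT u C U = int (rk U)" unfolding gT_def by simp
  moreover have "rk U = card U" using down[OF BJ assms(1)] rk_indep by blast
  ultimately show ?thesis using gT_sum[OF assms(3), of u U] by simp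
qed

end

context tmAB begin

lemma per_theta:
  fixes \<Delta> :: int and u :: "'a \<Rightarrow> int"
  assumes D: "\<Delta> > 0" and ub: "\<forall>x\<in>A\<union>B. -\<Delta> \<le> u x \<and> u x \<le> \<Delta>"
  and hyp: "\<forall>\<alpha>\<in>{-\<Delta>..\<Delta>}. \<forall>\<beta>\<in>{-\<Delta>..\<Delta>}. \<beta> \<le> \<alpha> \<longrightarrow> rho u \<alpha> (Bc u \<beta>) < 4*\<Delta>"
  shows "int (card {b\<in>B. u b \<le> \<theta>}) \<le> int (card {a\<in>A. u a < \<theta>}) + (2*\<Delta>+1)^2 * (4*\<Delta>)"
proof -
  define C where "C = {-\<Delta>..\<Delta>}"
  define U where "U = {b\<in>B. u b \<le> \<theta>}"
  have fC: "finite C" using C_def by simp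
  have cC: "int (card C) = 2*\<Delta>+1" using C_def D by simp
  have s1: "int (card U) \<le> (\<Sum>\<alpha>\<in>C. rho u \<alpha> U)"
    using card_le_sum_rho[of U u C] ub fC U_def C_def by auto
  have s2: "rho u \<alpha> U \<le> (if \<alpha> < \<theta> then int (card (Ac u \<alpha>)) else 0) + (2*\<Delta>+1)*(4*\<Delta>)" if a: "\<alpha> \<in> C" for \<alpha>
  proof (cases "\<alpha> < \<theta>")
    case True
    have "0 \<le> (2*\<Delta>+1)*(4*\<Delta>)" using D by simp
    moreover have "(if \<alpha> < \<theta> then int (card (Ac u \<alpha>)) else 0) = int (card (Ac u \<alpha>))" using True by simp
    ultimately show ?thesis using rho_le[of u \<alpha> U] by linarith
  next
    case False
    define S where "S = {\<beta>\<in>C. \<beta> \<le> \<theta>}"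
    have fS: "finite S" using fC S_def by simp
    have "U = (\<Union>\<beta>\<in>S. Bc u \<beta>)" using U_def S_def Bc_def C_def ub by auto
    then have "rho u \<alpha> U \<le> (\<Sum>\<beta>\<in>S. rho u \<alpha> (Bc u \<beta>))" using rho_UN[OF fS] by simp
    also have "\<dots> \<le> (\<Sum>\<beta>\<in>S. 4*\<Delta>)"
    proof (rule sum_mono)
      fix \<beta> assume "\<beta> \<in> S"
      then show "rho u \<alpha> (Bc u \<beta>) \<le> 4*\<Delta>" using hyp a False S_def C_def by fastforce
    qed
    also have "\<dots> = int (card S) * (4*\<Delta>)" by simp
    also have "\<dots> \<le> int (card C) * (4*\<Delta>)"
    proof -
      have "card S \<le> card C" using fC S_def by (intro card_mono) auto
      then show ?thesis using D by (intro mult_right_mono) auto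
    qed
    finally show ?thesis using cC False by simp
  qed
  have s3: "(\<Sum>\<alpha>\<in>C. rho u \<alpha> U) \<le> (\<Sum>\<alpha>\<in>C. (if \<alpha> < \<theta> then int (card (Ac u \<alpha>)) else 0)) + int (card C) * ((2*\<Delta>+1)*(4*\<Delta>))"
  proof -
    have "(\<Sum>\<alpha>\<in>C. rho u \<alpha> U) \<le> (\<Sum>\<alpha>\<in>C. (if \<alpha> < \<theta> then int (card (Ac u \<alpha>)) else 0) + (2*\<Delta>+1)*(4*\<Delta>))"
      using s2 by (intro sum_mono) auto
    then show ?thesis by (simp add: sum.distrib)
  qed
  have s4: "(\<Sum>\<alpha>\<in>C. (if \<alpha> < \<theta> then int (card (Ac u \<alpha>)) else 0)) = int (card {a\<in>A. u a < \<theta>})"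
  proof -
    define S where "S = {\<alpha>\<in>C. \<alpha> < \<theta>}"
    have fS: "finite S" using fC S_def by simp
    have "(\<Sum>\<alpha>\<in>C. (if \<alpha> < \<theta> then int (card (Ac u \<alpha>)) else 0)) = (\<Sum>\<alpha>\<in>S. int (card (Ac u \<alpha>)))"
      using fC S_def by (simp add: sum.inter_filter)
    also have "\<dots> = int (\<Sum>\<alpha>\<in>S. card (Ac u \<alpha>))" by simp
    also have "(\<Sum>\<alpha>\<in>S. card (Ac u \<alpha>)) = card (\<Union>\<alpha>\<in>S. Ac u \<alpha>)"
      using fS fA by (intro card_UN_disjoint[symmetric]) (auto simp: Ac_def)
    also have "(\<Union>\<alpha>\<in>S. Ac u \<alpha>) = {a\<in>A. u a < \<theta>}" using S_def Ac_def C_def ub by auto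
    finally show ?thesis .
  qed
  show ?thesis using s1 s3 s4 cC U_def by (simp add: power2_eq_square algebra_simps)
qed

lemma counting:
  fixes \<Delta> :: int and u :: "'a \<Rightarrow> int"
  assumes D: "\<Delta> > 0" and ub: "\<forall>x\<in>A\<union>B. -\<Delta> \<le> u x \<and> u x \<le> \<Delta>"
  and hyp: "\<forall>\<alpha>\<in>{-\<Delta>..\<Delta>}. \<forall>\<beta>\<in>{-\<Delta>..\<Delta>}. \<beta> \<le> \<alpha> \<longrightarrow> rho u \<alpha> (Bc u \<beta>) < 4*\<Delta>"
  shows "int k \<le> wsum u B - wsum u A + 4*\<Delta>*(2*\<Delta>+1)^3"
proof -
  define C where "C = {-\<Delta>..\<Delta>}"
  have fC: "finite C" using C_def by simp
  have cC: "int (card C) = 2*\<Delta>+1" using C_def D by simp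
  have "(\<Sum>\<theta>\<in>C. int (card {b\<in>B. u b \<le> \<theta>})) \<le> (\<Sum>\<theta>\<in>C. int (card {a\<in>A. u a < \<theta>}) + (2*\<Delta>+1)^2 * (4*\<Delta>))"
    using per_theta[OF D ub hyp] by (intro sum_mono) auto
  also have "\<dots> = (\<Sum>\<theta>\<in>C. int (card {a\<in>A. u a < \<theta>})) + int (card C) * ((2*\<Delta>+1)^2 * (4*\<Delta>))"
    by (simp add: sum.distrib)
  finally have main: "(\<Sum>\<theta>\<in>C. int (card {b\<in>B. u b \<le> \<theta>})) \<le> (\<Sum>\<theta>\<in>C. int (card {a\<in>A. u a < \<theta>})) + int (card C) * ((2*\<Delta>+1)^2 * (4*\<Delta>))" .
  have L: "(\<Sum>\<theta>\<in>C. int (card {b\<in>B. u b \<le> \<theta>})) = int k * (\<Delta>+1) - wsum u B"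
  proof -
    have "(\<Sum>\<theta>\<in>C. int (card {b\<in>B. u b \<le> \<theta>})) = (\<Sum>\<theta>\<in>C. \<Sum>b\<in>B. of_bool (u b \<le> \<theta>))"
    proof (rule sum.cong)
      fix \<theta> show "int (card {b\<in>B. u b \<le> \<theta>}) = (\<Sum>b\<in>B. of_bool (u b \<le> \<theta>))"
        using fB by (simp add: Int_def)
    qed simp
    also have "\<dots> = (\<Sum>b\<in>B. \<Sum>\<theta>\<in>C. of_bool (u b \<le> \<theta>))" by (rule sum.swap)
    also have "\<dots> = (\<Sum>b\<in>B. \<Delta> - u b + 1)"
    proof (rule sum.cong)
      fix b assume b: "b \<in> B"
      have "-\<Delta> \<le> u b" "u b \<le> \<Delta>" using ub b by auto
      then have "C \<inter> {\<theta>. u b \<le> \<theta>} = {u b..\<Delta>}" using C_def by auto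
      then show "(\<Sum>\<theta>\<in>C. of_bool (u b \<le> \<theta>)) = \<Delta> - u b + 1" using fC ub b by simp
    qed simp
    also have "\<dots> = int (card B) * (\<Delta>+1) - wsum u B"
      unfolding wsum_def by (simp add: sum.distrib sum_subtractf algebra_simps)
    finally show ?thesis using cB by simp
  qed
  have R: "(\<Sum>\<theta>\<in>C. int (card {a\<in>A. u a < \<theta>})) = int k * \<Delta> - wsum u A"
  proof -
    have "(\<Sum>\<theta>\<in>C. int (card {a\<in>A. u a < \<theta>})) = (\<Sum>\<theta>\<in>C. \<Sum>a\<in>A. of_bool (u a < \<theta>))"
    proof (rule sum.cong)
      fix \<theta> show "int (card {a\<in>A. u a < \<theta>}) = (\<Sum>a\<in>A. of_bool (u a < \<theta>))"
        using fA by (simp add: Int_def)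
    qed simp
    also have "\<dots> = (\<Sum>a\<in>A. \<Sum>\<theta>\<in>C. of_bool (u a < \<theta>))" by (rule sum.swap)
    also have "\<dots> = (\<Sum>a\<in>A. \<Delta> - u a)"
    proof (rule sum.cong)
      fix a assume a: "a \<in> A"
      have "-\<Delta> \<le> u a" "u a \<le> \<Delta>" using ub a by auto
      then have "C \<inter> {\<theta>. u a < \<theta>} = {u a + 1..\<Delta>}" using C_def by auto
      then show "(\<Sum>\<theta>\<in>C. of_bool (u a < \<theta>)) = \<Delta> - u a" using fC ub a by simp
    qed simp
    also have "\<dots> = int (card A) * \<Delta> - wsum u A"
      unfolding wsum_def by (simp add: sum_subtractf algebra_simps)
    finally show ?thesis using cA by simp
  qed
  have "int k * (\<Delta>+1) - wsum u B \<le> int k * \<Delta> - wsum u A + (2*\<Delta>+1) * ((2*\<Delta>+1)^2 * (4*\<Delta>))"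
    using main L R cC by simp
  then show ?thesis by (simp add: algebra_simps power3_eq_cube power2_eq_square)
qed

end

context tmAB begin

lemma get_I:
  assumes "rho u \<alpha> (Bc u \<beta>) \<ge> n"
  shows "\<exists>I1. I1 \<subseteq> Bc u \<beta> \<and> (A - Ac u \<alpha>) \<union> I1 \<in> J \<and> int (card I1) \<ge> n"
proof -
  define D where "D = A - Ac u \<alpha>"
  have DJ: "D \<in> J" unfolding D_def by (rule down[OF AJ]) blast
  obtain Y' where Y': "D \<subseteq> Y'" "Y' \<subseteq> D \<union> Bc u \<beta>" "Y' \<in> J" "card Y' = rk (D \<union> Bc u \<beta>)"
    using rk_extend[OF _ DJ, of "D \<union> Bc u \<beta>"] by auto
  define I1 where "I1 = Y' - D"
  have fY: "finite Y'" using finJ Y'(3) .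
  have "card I1 = card Y' - card D" unfolding I1_def using Y'(1) fY by (simp add: card_Diff_subset finite_subset)
  moreover have "card D \<le> card Y'" using Y'(1) fY card_mono by blast
  ultimately have "int (card I1) = rho u \<alpha> (Bc u \<beta>)" unfolding rho_def D_def[symmetric] using Y'(4) by simp
  moreover have "I1 \<subseteq> Bc u \<beta>" using Y'(2) I1_def by auto
  moreover have "D \<union> I1 = Y'" using Y'(1) I1_def by auto
  ultimately show ?thesis using assms Y'(3) D_def by (intro exI[of _ I1]) auto
qed

lemma sum_const_on:
  assumes "\<forall>x\<in>X. w x = c"
  shows "(\<Sum>x\<in>X. w x) = int (card X) * c"
proof -
  have "(\<Sum>x\<in>X. w x) = (\<Sum>x\<in>X. c)" using assms by (intro sum.cong) auto
  then show ?thesis by simp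
qed

lemma sol:
  fixes w :: "'a \<Rightarrow> int"
  assumes X1: "X1 \<subseteq> Ac w \<alpha>" and X2: "X2 \<subseteq> Ac w \<gamma>" and X12: "X1 \<inter> X2 = {}"
  and Y1: "Y1 \<subseteq> Bc w \<beta>" and Y2: "Y2 \<subseteq> Bc w \<delta>" and Y12: "Y1 \<inter> Y2 = {}"
  and c1: "card X1 = card Y1" and c2: "card X2 = card Y2"
  and inJ: "(A - X1 - X2) \<union> Y1 \<union> Y2 \<in> J" and ne: "Y1 \<noteq> {}"
  and eq: "int (card Y1) * (\<beta> - \<alpha>) + int (card Y2) * (\<delta> - \<gamma>) = 0"
  shows "\<exists>A'\<in>J. A' \<noteq> A \<and> wsum w A' = wsum w A \<and> card A' = card A"
proof -
  define R where "R = A - X1 - X2"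
  have XA: "X1 \<subseteq> A" "X2 \<subseteq> A" using X1 X2 Ac_def by auto
  have YB: "Y1 \<subseteq> B" "Y2 \<subseteq> B" using Y1 Y2 Bc_def by auto
  have fX: "finite X1" "finite X2" using XA fA by (auto intro: finite_subset)
  have fY: "finite Y1" "finite Y2" using YB fB by (auto intro: finite_subset)
  have fR: "finite R" using R_def fA by simp
  have RY: "R \<inter> Y1 = {}" "R \<inter> Y2 = {}" using R_def YB AB by auto
  have Aeq: "A = R \<union> X1 \<union> X2" using R_def XA by auto
  have RX: "R \<inter> X1 = {}" "R \<inter> X2 = {}" using R_def by auto
  have wA: "wsum w A = wsum w R + wsum w X1 + wsum w X2"
  proof -
    have "wsum w (R \<union> X1 \<union> X2) = wsum w (R \<union> X1) + wsum w X2"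
      unfolding wsum_def using fR fX RX X12 by (intro sum.union_disjoint) auto
    moreover have "wsum w (R \<union> X1) = wsum w R + wsum w X1"
      unfolding wsum_def using fR fX RX by (intro sum.union_disjoint) auto
    ultimately show ?thesis using Aeq by simp
  qed
  have wA': "wsum w (R \<union> Y1 \<union> Y2) = wsum w R + wsum w Y1 + wsum w Y2"
  proof -
    have "wsum w (R \<union> Y1 \<union> Y2) = wsum w (R \<union> Y1) + wsum w Y2"
      unfolding wsum_def using fR fY RY Y12 by (intro sum.union_disjoint) auto
    moreover have "wsum w (R \<union> Y1) = wsum w R + wsum w Y1"
      unfolding wsum_def using fR fY RY by (intro sum.union_disjoint) auto
    ultimately show ?thesis by simp
  qed
  have "wsum w X1 = int (card X1) * \<alpha>" unfolding wsum_def using X1 Ac_def by (intro sum_const_on) auto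
  moreover have "wsum w X2 = int (card X2) * \<gamma>" unfolding wsum_def using X2 Ac_def by (intro sum_const_on) auto
  moreover have "wsum w Y1 = int (card Y1) * \<beta>" unfolding wsum_def using Y1 Bc_def by (intro sum_const_on) auto
  moreover have "wsum w Y2 = int (card Y2) * \<delta>" unfolding wsum_def using Y2 Bc_def by (intro sum_const_on) auto
  ultimately have W: "wsum w (R \<union> Y1 \<union> Y2) = wsum w A" using wA wA' c1 c2 eq by (simp add: algebra_simps)
  have cR: "card R = card A - card X1 - card X2"
  proof -
    have "card A = card R + card X1 + card X2" using Aeq fR fX RX X12 card_un3[of R X1 X2] by simp
    then show ?thesis by simp
  qed
  have cA': "card (R \<union> Y1 \<union> Y2) = card R + card Y1 + card Y2" using fR fY RY Y12 by (intro card_un3) auto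
  have "card X1 + card X2 \<le> card A" using Aeq fR fX RX X12 card_un3[of R X1 X2] by simp
  then have C: "card (R \<union> Y1 \<union> Y2) = card A" using cR cA' c1 c2 by simp
  have N: "R \<union> Y1 \<union> Y2 \<noteq> A" using ne YB AB by blast
  show ?thesis using W C N inJ R_def by (intro bexI[of _ "R \<union> Y1 \<union> Y2"]) auto
qed

end

context tmAB begin

lemma zero_case:
  fixes w :: "'a \<Rightarrow> int"
  assumes "rho w \<alpha> (Bc w \<alpha>) \<ge> 1"
  shows "\<exists>A'\<in>J. A' \<noteq> A \<and> wsum w A' = wsum w A \<and> card A' = card A"
proof -
  obtain I1 where I1: "I1 \<subseteq> Bc w \<alpha>" "(A - Ac w \<alpha>) \<union> I1 \<in> J" "int (card I1) \<ge> 1"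
    using get_I[OF assms] by blast
  then have "I1 \<noteq> {}" by auto
  then obtain b where b: "b \<in> I1" by blast
  define P where "P = Ac w \<alpha>"
  have PA: "P \<subseteq> A" using P_def Ac_def by auto
  have bA: "{b} \<inter> A = {}" using b I1(1) Bc_def AB by auto
  have i1: "(A - P) \<union> {b} \<in> J" by (rule down[OF I1(2)]) (use b P_def in auto)
  have i2: "(A - P) \<union> {} \<in> J" by (rule down[OF AJ]) auto
  have i3: "(A - P - P) \<union> {b} \<union> {} \<in> J" using i1 by simp
  obtain X1 X2 where X: "X1 \<subseteq> P" "X2 \<subseteq> P" "X1 \<inter> X2 = {}" "card X1 = card {b}" "card X2 = card ({}::'a set)"
      "(A - X1 - X2) \<union> {b} \<union> {} \<in> J"
    using exch2[OF AJ cA PA PA _ bA _ _ i1 i2 i3] by auto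
  have "finite X2" using X(2) PA fA by (meson finite_subset)
  then have "X2 = {}" using X(5) by simp
  show ?thesis
    by (rule sol[of X1 w \<alpha> X2 \<alpha> "{b}" \<alpha> "{}" \<alpha>]) (use X P_def b I1 \<open>X2 = {}\<close> in auto)
qed

lemma posneg_case:
  fixes w :: "'a \<Rightarrow> int" and \<Delta> :: int
  assumes ab: "\<alpha> < \<beta>" "\<beta> - \<alpha> \<le> 2*\<Delta>" and gd: "\<delta> < \<gamma>" "\<gamma> - \<delta> \<le> 2*\<Delta>"
  and r1: "rho w \<alpha> (Bc w \<beta>) \<ge> 4*\<Delta>" and r2: "rho w \<gamma> (Bc w \<delta>) \<ge> 4*\<Delta>"
  shows "\<exists>A'\<in>J. A' \<noteq> A \<and> wsum w A' = wsum w A \<and> card A' = card A"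
proof -
  define p where "p = \<beta> - \<alpha>"
  define q where "q = \<gamma> - \<delta>"
  obtain I1 where I1: "I1 \<subseteq> Bc w \<beta>" "(A - Ac w \<alpha>) \<union> I1 \<in> J" "int (card I1) \<ge> 4*\<Delta>"
    using get_I[OF r1] by blast
  obtain I2 where I2: "I2 \<subseteq> Bc w \<delta>" "(A - Ac w \<gamma>) \<union> I2 \<in> J" "int (card I2) \<ge> 4*\<Delta>"
    using get_I[OF r2] by blast
  have I1B: "I1 \<subseteq> B" and I2B: "I2 \<subseteq> B" using I1(1) I2(1) Bc_def by auto
  have fI1: "finite I1" using I1B fB by (meson finite_subset)
  have fI2: "finite I2" using I2B fB by (meson finite_subset)
  have "nat p \<le> card I2" using I2(3) ab gd p_def by linarith
  then obtain Y2 where Y2: "Y2 \<subseteq> I2" "card Y2 = nat p" using obtain_subset_with_card_n by metis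
  define Dd where "Dd = A - Ac w \<alpha> - Ac w \<gamma>"
  have fDd: "finite Dd" using Dd_def fA by simp
  have fY2: "finite Y2" using Y2(1) fI2 by (meson finite_subset)
  have DY2: "Dd \<union> Y2 \<in> J" by (rule down[OF I2(2)]) (use Y2 Dd_def in auto)
  have DI1: "Dd \<union> I1 \<in> J" by (rule down[OF I1(2)]) (use Dd_def in auto)
  have dY2: "Dd \<inter> Y2 = {}" using Dd_def Y2(1) I2B AB by auto
  have dI1: "Dd \<inter> I1 = {}" using Dd_def I1B AB by auto
  have cDY2: "card (Dd \<union> Y2) = card Dd + nat p" using dY2 fDd fY2 Y2(2) by (simp add: card_Un_disjoint)
  have cDI1: "card (Dd \<union> I1) = card Dd + card I1" using dI1 fDd fI1 by (simp add: card_Un_disjoint)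
  have "card (Dd \<union> Y2) + nat q \<le> card (Dd \<union> I1)" using cDY2 cDI1 I1(3) ab gd p_def q_def by linarith
  then obtain W where W: "W \<subseteq> (Dd \<union> I1) - (Dd \<union> Y2)" "(Dd \<union> Y2) \<union> W \<in> J" "card ((Dd \<union> Y2) \<union> W) = card (Dd \<union> Y2) + nat q"
    using aug_full[OF DY2 DI1, of "card (Dd \<union> Y2) + nat q"] by auto
  have WI1: "W \<subseteq> I1" "W \<inter> Y2 = {}" using W(1) by auto
  have fW: "finite W" using WI1 fI1 by (meson finite_subset)
  have "card ((Dd \<union> Y2) \<union> W) = card (Dd \<union> Y2) + card W"
    using W(1) fW fDd fY2 by (intro card_Un_disjoint) auto
  then have cW: "card W = nat q" using W(3) by simp
  define P where "P = Ac w \<alpha>"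
  define Q where "Q = Ac w \<gamma>"
  have PA: "P \<subseteq> A" and QA: "Q \<subseteq> A" using P_def Q_def Ac_def by auto
  have PQ: "P = Q \<or> P \<inter> Q = {}" using P_def Q_def Ac_def by auto
  have WA: "W \<inter> A = {}" using WI1 I1B AB by auto
  have Y2A: "Y2 \<inter> A = {}" using Y2(1) I2B AB by auto
  have WY2: "W \<inter> Y2 = {}" using WI1 by simp
  have i1: "(A - P) \<union> W \<in> J" by (rule down[OF I1(2)]) (use WI1 P_def in auto)
  have i2: "(A - Q) \<union> Y2 \<in> J" by (rule down[OF I2(2)]) (use Y2 Q_def in auto)
  have i3: "(A - P - Q) \<union> W \<union> Y2 \<in> J"
  proof -
    have "(A - P - Q) \<union> W \<union> Y2 = (Dd \<union> Y2) \<union> W" using Dd_def P_def Q_def by auto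
    then show ?thesis using W(2) by simp
  qed
  obtain X1 X2 where X: "X1 \<subseteq> P" "X2 \<subseteq> Q" "X1 \<inter> X2 = {}" "card X1 = card W" "card X2 = card Y2"
      "(A - X1 - X2) \<union> W \<union> Y2 \<in> J"
    using exch2[OF AJ cA PA QA PQ WA Y2A WY2 i1 i2 i3] by blast
  have ne: "W \<noteq> {}" using cW gd q_def by auto
  have eq: "int (card W) * (\<beta> - \<alpha>) + int (card Y2) * (\<delta> - \<gamma>) = 0"
    using cW Y2(2) ab gd p_def q_def by (simp add: algebra_simps)
  show ?thesis
    by (rule sol[of X1 w \<alpha> X2 \<gamma> W \<beta> Y2 \<delta>]) (use X P_def Q_def WI1 I1 Y2 I2 ne eq WY2 in auto)
qed

lemma Ac_neg: "Ac (\<lambda>x. - w x) c = Ac w (-c)" unfolding Ac_def by auto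
lemma Bc_neg: "Bc (\<lambda>x. - w x) c = Bc w (-c)" unfolding Bc_def by auto
lemma rho_neg: "rho (\<lambda>x. - w x) c U = rho w (-c) U" unfolding rho_def Ac_neg ..
lemma wsum_neg: "wsum (\<lambda>x. - w x) S = - wsum w S" unfolding wsum_def by (simp add: sum_negf)

theorem main_loc:
  fixes w :: "'a \<Rightarrow> int" and \<Delta> :: int
  assumes D: "\<Delta> > 0" and wb: "\<forall>x\<in>A\<union>B. -\<Delta> \<le> w x \<and> w x \<le> \<Delta>"
  and big: "int k > 4*\<Delta>*(2*\<Delta>+1)^3 + \<bar>wsum w A - wsum w B\<bar>"
  shows "\<exists>A'\<in>J. A' \<noteq> A \<and> wsum w A' = wsum w A \<and> card A' = card A"
proof -
  define C where "C = {-\<Delta>..\<Delta>}"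
  show ?thesis
  proof (cases "\<exists>\<alpha>\<in>C. rho w \<alpha> (Bc w \<alpha>) \<ge> 1")
    case True
    then show ?thesis using zero_case by blast
  next
    case noZ: False
    show ?thesis
    proof (cases "(\<exists>\<alpha>\<in>C. \<exists>\<beta>\<in>C. \<alpha> < \<beta> \<and> rho w \<alpha> (Bc w \<beta>) \<ge> 4*\<Delta>) \<and>
                  (\<exists>\<gamma>\<in>C. \<exists>\<delta>\<in>C. \<delta> < \<gamma> \<and> rho w \<gamma> (Bc w \<delta>) \<ge> 4*\<Delta>)")
      case True
      then obtain \<alpha> \<beta> \<gamma> \<delta> where h: "\<alpha>\<in>C" "\<beta>\<in>C" "\<alpha> < \<beta>" "rho w \<alpha> (Bc w \<beta>) \<ge> 4*\<Delta>"
        "\<gamma>\<in>C" "\<delta>\<in>C" "\<delta> < \<gamma>" "rho w \<gamma> (Bc w \<delta>) \<ge> 4*\<Delta>" by blast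
      show ?thesis using posneg_case[of \<alpha> \<beta> \<Delta> \<delta> \<gamma> w] h C_def by auto
    next
      case False
      then consider (nP) "\<forall>\<alpha>\<in>C. \<forall>\<beta>\<in>C. \<alpha> < \<beta> \<longrightarrow> rho w \<alpha> (Bc w \<beta>) < 4*\<Delta>"
        | (nN) "\<forall>\<gamma>\<in>C. \<forall>\<delta>\<in>C. \<delta> < \<gamma> \<longrightarrow> rho w \<gamma> (Bc w \<delta>) < 4*\<Delta>"
        by (meson not_le)
      then show ?thesis
      proof cases
        case nN
        have hyp: "\<forall>\<alpha>\<in>{-\<Delta>..\<Delta>}. \<forall>\<beta>\<in>{-\<Delta>..\<Delta>}. \<beta> \<le> \<alpha> \<longrightarrow> rho w \<alpha> (Bc w \<beta>) < 4*\<Delta>"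
        proof (intro ballI impI)
          fix \<alpha> \<beta> assume a: "\<alpha> \<in> {-\<Delta>..\<Delta>}" "\<beta> \<in> {-\<Delta>..\<Delta>}" "\<beta> \<le> \<alpha>"
          show "rho w \<alpha> (Bc w \<beta>) < 4*\<Delta>"
          proof (cases "\<beta> = \<alpha>")
            case True then show ?thesis using noZ a C_def D by force
          next
            case False then show ?thesis using nN a C_def by force
          qed
        qed
        have "int k \<le> wsum w B - wsum w A + 4*\<Delta>*(2*\<Delta>+1)^3" by (rule counting[OF D wb hyp])
        then show ?thesis using big by linarith
      next
        case nP
        have wb': "\<forall>x\<in>A\<union>B. -\<Delta> \<le> - w x \<and> - w x \<le> \<Delta>" using wb by force
        have hyp: "\<forall>\<alpha>\<in>{-\<Delta>..\<Delta>}. \<forall>\<beta>\<in>{-\<Delta>..\<Delta>}. \<beta> \<le> \<alpha> \<longrightarrow> rho (\<lambda>x. - w x) \<alpha> (Bc (\<lambda>x. - w x) \<beta>) < 4*\<Delta>"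
        proof (intro ballI impI)
          fix \<alpha> \<beta> assume a: "\<alpha> \<in> {-\<Delta>..\<Delta>}" "\<beta> \<in> {-\<Delta>..\<Delta>}" "\<beta> \<le> \<alpha>"
          have m: "-\<alpha> \<in> C" "-\<beta> \<in> C" using a C_def by auto
          show "rho (\<lambda>x. - w x) \<alpha> (Bc (\<lambda>x. - w x) \<beta>) < 4*\<Delta>"
            unfolding rho_neg Bc_neg
          proof (cases "\<beta> = \<alpha>")
            case True then show "rho w (-\<alpha>) (Bc w (-\<beta>)) < 4*\<Delta>" using noZ m D by force
          next
            case False then show "rho w (-\<alpha>) (Bc w (-\<beta>)) < 4*\<Delta>" using nP m a by force
          qed
        qed
        have "int k \<le> wsum (\<lambda>x. - w x) B - wsum (\<lambda>x. - w x) A + 4*\<Delta>*(2*\<Delta>+1)^3"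
          by (rule counting[OF D wb' hyp])
        then show ?thesis using big unfolding wsum_neg by linarith
      qed
    qed
  qed
qed

end

lemma trunc_tm:
  assumes "matroid E I"
  shows "tm E {X\<in>I. card X \<le> k} k"
proof -
  have m: "finite E" "\<forall>X\<in>I. X \<subseteq> E" "{} \<in> I" "\<forall>X Y. Y \<in> I \<longrightarrow> X \<subseteq> Y \<longrightarrow> X \<in> I"
     "\<forall>X Y. X \<in> I \<longrightarrow> Y \<in> I \<longrightarrow> card X < card Y \<longrightarrow> (\<exists>e \<in> Y - X. insert e X \<in> I)"
    using assms unfolding matroid_def by blast+
  show ?thesis
  proof
    show "finite E" by (rule m(1))
    show "X \<in> {X \<in> I. card X \<le> k} \<Longrightarrow> X \<subseteq> E" for X using m(2) by blast
    show "{} \<in> {X \<in> I. card X \<le> k}" using m(3) by simp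
    show "X \<in> {X \<in> I. card X \<le> k}" if "Y \<in> {X \<in> I. card X \<le> k}" "X \<subseteq> Y" for X Y
    proof -
      have "Y \<subseteq> E" using that(1) m(2) by blast
      then have "finite Y" using m(1) by (rule finite_subset)
      then have "card X \<le> card Y" using that(2) card_mono by blast
      then show ?thesis using that m(4) by auto
    qed
    show "\<exists>e\<in>Y - X. insert e X \<in> {X \<in> I. card X \<le> k}"
      if h: "X \<in> {X \<in> I. card X \<le> k}" "Y \<in> {X \<in> I. card X \<le> k}" "card X < card Y" for X Y
    proof -
      have "X \<in> I" "Y \<in> I" using h by auto
      then obtain e where e: "e \<in> Y - X" "insert e X \<in> I" using h(3) m(5) by blast
      have "X \<subseteq> E" using h(1) m(2) by blast
      then have "finite X" using m(1) by (rule finite_subset)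
      then have "card (insert e X) = card X + 1" using e by simp
      then show ?thesis using e h by auto
    qed
    show "X \<in> {X \<in> I. card X \<le> k} \<Longrightarrow> card X \<le> k" for X by simp
  qed
qed

theorem theorem6:
  fixes E :: "'a set" and I :: "'a set set" and w :: "'a \<Rightarrow> int"
    and \<Delta> :: int and \<mu> :: real and A B :: "'a set"
  assumes "matroid E I"
    and "\<Delta> > 0"
    and "\<forall>e\<in>E. -\<Delta> \<le> w e \<and> w e \<le> \<Delta>"
    and "\<mu> \<ge> 0"
    and "A \<in> I" and "B \<in> I" and "A \<inter> B = {}"
    and "card A = card B"
    and "real_of_int \<bar>wsum w A - wsum w B\<bar> \<le> \<mu>"
    and "real (card A) \<ge> real_of_int ((2 * \<Delta> + 1) ^ 5) + \<mu>"
  shows "\<exists>A'\<in>I. A' \<noteq> A \<and> wsum w A' = wsum w A \<and> card A' = card A"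
proof -
  define J' where "J' = {X\<in>I. card X \<le> card A}"
  have tmJ: "tm E J' (card A)" unfolding J'_def by (rule trunc_tm[OF assms(1)])
  have AJ: "A \<in> J'" and BJ: "B \<in> J'" using assms(5,6,8) J'_def by auto
  interpret T: tmAB E J' "card A" A B
    using tmJ AJ BJ assms(7,8) by (simp add: tmAB_def tmAB_axioms_def)
  have sub: "A \<subseteq> E" "B \<subseteq> E" using assms(1,5,6) unfolding matroid_def by auto
  have wb: "\<forall>x\<in>A\<union>B. -\<Delta> \<le> w x \<and> w x \<le> \<Delta>" using sub assms(3) by blast
  have "real_of_int (int (card A)) \<ge> real_of_int ((2 * \<Delta> + 1) ^ 5 + \<bar>wsum w A - wsum w B\<bar>)"
    using assms(9,10) by simp
  then have k1: "int (card A) \<ge> (2 * \<Delta> + 1) ^ 5 + \<bar>wsum w A - wsum w B\<bar>" by linarith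
  have "(2*\<Delta>+1)^2 = 4*(\<Delta>*\<Delta>) + 4*\<Delta> + 1" by (simp add: power2_eq_square algebra_simps)
  moreover have "0 \<le> \<Delta>*\<Delta>" by simp
  ultimately have "4*\<Delta> < (2*\<Delta>+1)^2" by linarith
  moreover have "(0::int) < (2*\<Delta>+1)^3" using assms(2) by simp
  ultimately have "4*\<Delta>*(2*\<Delta>+1)^3 < (2*\<Delta>+1)^2 * (2*\<Delta>+1)^3" by (rule mult_strict_right_mono)
  moreover have "(2*\<Delta>+1)^2 * (2*\<Delta>+1)^3 = (2*\<Delta>+1)^5" by (subst power_add[symmetric]) simp
  ultimately have "4*\<Delta>*(2*\<Delta>+1)^3 < (2*\<Delta>+1)^5" by simp
  then have big: "int (card A) > 4*\<Delta>*(2*\<Delta>+1)^3 + \<bar>wsum w A - wsum w B\<bar>" using k1 by linarith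
  obtain A' where A': "A' \<in> J'" "A' \<noteq> A" "wsum w A' = wsum w A" "card A' = card A"
    using T.main_loc[OF assms(2) wb big] by blast
  then show ?thesis using J'_def by auto
qed

end
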